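(* Let $n\ge3$, let $S_n$ act on $V=\mathbb{C}^n$ by permutations, fix $a,b,c\in\mathbb{C}$, and let $*\in\{L,C\}$. For $g\in S_n$ let $\phi^*_g$ be the $g$-component of $\phi(\kappa^*_{\mathrm{tri}},\kappa^L_{\mathrm{tri}})$. If $g$ is not a $5$-cycle, then $\phi^*_g\equiv0$.
   Context: $S_n$ acts by $\sigma e_i=e_{\sigma(i)}$; $V^g$ is the fixed space of $g$. $\kappa^L_{\mathrm{tri}}$ is the linear 2-cochain supported on 3-cycles with $\kappa^L_{(ijk)}(e_i,e_j)=\kappa^L_{(ijk)}(e_j,e_k)=\kappa^L_{(ijk)}(e_k,e_i)=a(e_i+e_j+e_k)+b\sum_{l\notin\{i,j,k\}}e_l$ and $\kappa^L_{(ijk)}(e_l,e_m)=0$ whenever $e_l$ or $e_m$ lies in $V^{(ijk)}$; $\kappa^C_{\mathrm{tri}}$ is the constant 2-cochain supported on 3-cycles with $\kappa^C_{(ijk)}(e_i,e_j)=\kappa^C_{(ijk)}(e_j,e_k)=\kappa^C_{(ijk)}(e_k,e_i)=c$ and $\kappa^C_{(ijk)}(e_l,e_m)=0$ whenever $e_l$ or $e_m$ lies in $V^{(ijk)}$. For $\alpha$ linear or constant and $\beta$ linear 2-cochains ($\alpha=\sum_g\alpha_gg$ etc.), $\phi(\alpha,\beta)=\sum_g\phi_gg$ with $\phi_g=\sum_{xy=g}\phi_{x,y}$, $\phi_{x,y}(v_1,v_2,v_3)=\alpha_x(v_1+yv_1,\beta_y(v_2,v_3))+\alpha_x(v_2+yv_2,\beta_y(v_3,v_1))+\alpha_x(v_3+yv_3,\beta_y(v_1,v_2))$.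 *)

theory Defs
  imports Complex_Main "HOL-Combinatorics.Combinatorics" "HOL-Library.Function_Algebras"
begin

definition vecV :: "nat \<Rightarrow> (nat \<Rightarrow> complex) set" where
  "vecV n = {v. \<forall>i\<ge>n. v i = 0}"

(* permutation action  sigma e_i = e_(sigma i), extended linearly *)
definition act :: "(nat \<Rightarrow> nat) \<Rightarrow> (nat \<Rightarrow> complex) \<Rightarrow> (nat \<Rightarrow> complex)" where
  "act \<sigma> v = (\<lambda>l. v (inv \<sigma> l))"

definition is_kcycle :: "nat \<Rightarrow> nat \<Rightarrow> (nat \<Rightarrow> nat) \<Rightarrow> bool" where
  "is_kcycle n k g \<longleftrightarrow> (\<exists>cs. length cs = k \<and> distinct cs \<and> set cs \<subseteq> {..<n} \<and> g = cycle_of_list cs)"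

(* Values on basis pairs (e_l, e_m) of kappa^L_tri at g.  For a 3-cycle (i j k), the
   ordered pairs (i,j),(j,k),(k,i) are exactly the pairs (l, g l) with l moved by g;
   the cochain is alternating, so the reversed pairs get the negative value, and all
   pairs involving a fixed point of g vanish. *)
definition kappaL_basis :: "nat \<Rightarrow> complex \<Rightarrow> complex \<Rightarrow> (nat \<Rightarrow> nat) \<Rightarrow> nat \<Rightarrow> nat \<Rightarrow> (nat \<Rightarrow> complex)" where
  "kappaL_basis n a b g l m =
     (let w = (\<lambda>p. if p < n then (if g p \<noteq> p then a else b) else 0) in
      if is_kcycle n 3 g \<and> g l \<noteq> l \<and> m = g l then w
      else if is_kcycle n 3 g \<and> g m \<noteq> m \<and> l = g m then - w
      else 0)"

definition kappaC_basis :: "nat \<Rightarrow> complex \<Rightarrow> (nat \<Rightarrow> nat) \<Rightarrow> nat \<Rightarrow> nat \<Rightarrow> complex" where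
  "kappaC_basis n c g l m =
      (if is_kcycle n 3 g \<and> g l \<noteq> l \<and> m = g l then c
       else if is_kcycle n 3 g \<and> g m \<noteq> m \<and> l = g m then - c
       else 0)"

definition kappaL :: "nat \<Rightarrow> complex \<Rightarrow> complex \<Rightarrow> (nat \<Rightarrow> nat) \<Rightarrow> (nat \<Rightarrow> complex) \<Rightarrow> (nat \<Rightarrow> complex) \<Rightarrow> (nat \<Rightarrow> complex)" where
  "kappaL n a b g u w = (\<lambda>p. \<Sum>l<n. \<Sum>m<n. u l * w m * kappaL_basis n a b g l m p)"

definition kappaC :: "nat \<Rightarrow> complex \<Rightarrow> (nat \<Rightarrow> nat) \<Rightarrow> (nat \<Rightarrow> complex) \<Rightarrow> (nat \<Rightarrow> complex) \<Rightarrow> complex" where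
  "kappaC n c g u w = (\<Sum>l<n. \<Sum>m<n. u l * w m * kappaC_basis n c g l m)"

definition phi_xy :: "((nat \<Rightarrow> nat) \<Rightarrow> (nat \<Rightarrow> complex) \<Rightarrow> (nat \<Rightarrow> complex) \<Rightarrow> 'b::comm_monoid_add)
   \<Rightarrow> ((nat \<Rightarrow> nat) \<Rightarrow> (nat \<Rightarrow> complex) \<Rightarrow> (nat \<Rightarrow> complex) \<Rightarrow> (nat \<Rightarrow> complex))
   \<Rightarrow> (nat \<Rightarrow> nat) \<Rightarrow> (nat \<Rightarrow> nat) \<Rightarrow> (nat \<Rightarrow> complex) \<Rightarrow> (nat \<Rightarrow> complex) \<Rightarrow> (nat \<Rightarrow> complex) \<Rightarrow> 'b" where
  "phi_xy \<alpha> \<beta> x y v1 v2 v3 =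
     \<alpha> x (v1 + act y v1) (\<beta> y v2 v3) + \<alpha> x (v2 + act y v2) (\<beta> y v3 v1) + \<alpha> x (v3 + act y v3) (\<beta> y v1 v2)"

definition phi_g :: "nat \<Rightarrow> ((nat \<Rightarrow> nat) \<Rightarrow> (nat \<Rightarrow> complex) \<Rightarrow> (nat \<Rightarrow> complex) \<Rightarrow> 'b::comm_monoid_add)
   \<Rightarrow> ((nat \<Rightarrow> nat) \<Rightarrow> (nat \<Rightarrow> complex) \<Rightarrow> (nat \<Rightarrow> complex) \<Rightarrow> (nat \<Rightarrow> complex))
   \<Rightarrow> (nat \<Rightarrow> nat) \<Rightarrow> (nat \<Rightarrow> complex) \<Rightarrow> (nat \<Rightarrow> complex) \<Rightarrow> (nat \<Rightarrow> complex) \<Rightarrow> 'b" where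
  "phi_g n \<alpha> \<beta> g v1 v2 v3 =
     (\<Sum>(x, y) \<in> {(x, y). x permutes {..<n} \<and> y permutes {..<n} \<and> x \<circ> y = g}.
        phi_xy \<alpha> \<beta> x y v1 v2 v3)"

end

theory Submission
  imports Defs
begin


lemma cyc3: "distinct [i,j,k] \<Longrightarrow> cycle_of_list [i,j,k] = (\<lambda>x. if x = i then j else if x = j then k else if x = k then i else x)"
  by (rule ext) (auto simp: transpose_def)

lemma cyc5: "distinct [i,j,k,l,m] \<Longrightarrow> cycle_of_list [i,j,k,l,m] = (\<lambda>x. if x = i then j else if x = j then k else if x = k then l else if x = l then m else if x = m then i else x)"
  by (rule ext) (auto simp: transpose_def)

lemma rot3: assumes "distinct [i,j,k]" shows "cycle_of_list [i,j,k] = cycle_of_list [j,k,i]"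
proof -
  have "distinct [j,k,i]" using assms by auto
  then show ?thesis using cyc3[OF assms] cyc3[of j k i] by (auto simp: fun_eq_iff)
qed

lemma five: assumes "distinct [i,j,k]" "distinct [i,q,r]" "j \<notin> {q,r}" "k \<notin> {q,r}"
  shows "cycle_of_list [i,j,k] \<circ> cycle_of_list [i,q,r] = cycle_of_list [i,q,r,j,k]"
proof -
  have d: "distinct [i,q,r,j,k]" using assms by auto
  show ?thesis unfolding cyc3[OF assms(1)] cyc3[OF assms(2)] cyc5[OF d] using assms by (auto simp: fun_eq_iff)
qed

definition om :: "nat \<Rightarrow> nat \<Rightarrow> nat \<Rightarrow> (nat \<Rightarrow> complex) \<Rightarrow> (nat \<Rightarrow> complex) \<Rightarrow> complex" where
  "om i j k u w = u i * w j + u j * w k + u k * w i - u j * w i - u k * w j - u i * w k"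

definition Wt :: "nat \<Rightarrow> complex \<Rightarrow> complex \<Rightarrow> nat set \<Rightarrow> nat \<Rightarrow> complex" where
  "Wt n a b S p = (if p < n then (if p \<in> S then a else b) else 0)"

lemma kc3: "distinct [i,j,k] \<Longrightarrow> i < n \<Longrightarrow> j < n \<Longrightarrow> k < n \<Longrightarrow> is_kcycle n 3 (cycle_of_list [i,j,k])"
  unfolding is_kcycle_def by (rule exI[of _ "[i,j,k]"]) auto

lemma double_restrict:
  fixes F :: "nat \<Rightarrow> nat \<Rightarrow> complex"
  assumes "S \<subseteq> {..<n}" "\<And>l m. l \<notin> S \<or> m \<notin> S \<Longrightarrow> F l m = 0"
  shows "(\<Sum>l<n. \<Sum>m<n. F l m) = (\<Sum>l\<in>S. \<Sum>m\<in>S. F l m)"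
proof -
  have fS: "finite S" using assms(1) finite_subset by blast
  have "(\<Sum>l<n. \<Sum>m<n. F l m) = (\<Sum>l\<in>S. \<Sum>m<n. F l m)"
    by (rule sum.mono_neutral_right) (use assms in auto)
  also have "\<dots> = (\<Sum>l\<in>S. \<Sum>m\<in>S. F l m)"
    by (rule sum.cong[OF refl], rule sum.mono_neutral_right) (use assms in auto)
  finally show ?thesis .
qed

lemma kL:
  assumes d: "distinct [i,j,k]" and lt: "i < n" "j < n" "k < n"
  shows "kappaL n a b (cycle_of_list [i,j,k]) u w = (\<lambda>p. om i j k u w * Wt n a b {i,j,k} p)"
proof
  fix p
  define y where "y = cycle_of_list [i,j,k]"
  have kc: "is_kcycle n 3 y" unfolding y_def using kc3 d lt by blast
  have ye: "y = (\<lambda>x. if x = i then j else if x = j then k else if x = k then i else x)"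
    unfolding y_def using cyc3[OF d] .
  have mv: "(y l \<noteq> l) = (l \<in> {i,j,k})" for l using d unfolding ye by auto
  have W: "(if p < n then (if y p \<noteq> p then a else b) else 0) = Wt n a b {i,j,k} p"
    unfolding Wt_def mv by simp
  have bas: "kappaL_basis n a b y l m p = (if l \<in> {i,j,k} \<and> m = y l then Wt n a b {i,j,k} p
      else if m \<in> {i,j,k} \<and> l = y m then - Wt n a b {i,j,k} p else 0)" for l m
    unfolding kappaL_basis_def Let_def using kc mv W by simp
  have "kappaL n a b y u w p = (\<Sum>l<n. \<Sum>m<n. u l * w m * kappaL_basis n a b y l m p)"
    unfolding kappaL_def by simp
  also have "\<dots> = (\<Sum>l\<in>{i,j,k}. \<Sum>m\<in>{i,j,k}. u l * w m * kappaL_basis n a b y l m p)"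
    apply (rule double_restrict) using lt apply auto[1] apply (simp only: bas) using d by (auto simp: ye)
  also have "\<dots> = om i j k u w * Wt n a b {i,j,k} p"
    using d unfolding bas by (simp add: ye om_def algebra_simps)
  finally show "kappaL n a b (cycle_of_list [i,j,k]) u w p = om i j k u w * Wt n a b {i,j,k} p"
    unfolding y_def .
qed

lemma kC:
  assumes d: "distinct [i,j,k]" and lt: "i < n" "j < n" "k < n"
  shows "kappaC n c (cycle_of_list [i,j,k]) u w = c * om i j k u w"
proof -
  define y where "y = cycle_of_list [i,j,k]"
  have kc: "is_kcycle n 3 y" unfolding y_def using kc3 d lt by blast
  have ye: "y = (\<lambda>x. if x = i then j else if x = j then k else if x = k then i else x)"
    unfolding y_def using cyc3[OF d] .
  have mv: "(y l \<noteq> l) = (l \<in> {i,j,k})" for l using d unfolding ye by auto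
  have bas: "kappaC_basis n c y l m = (if l \<in> {i,j,k} \<and> m = y l then c
      else if m \<in> {i,j,k} \<and> l = y m then - c else 0)" for l m
    unfolding kappaC_basis_def using kc mv by simp
  have "kappaC n c y u w = (\<Sum>l<n. \<Sum>m<n. u l * w m * kappaC_basis n c y l m)"
    unfolding kappaC_def by simp
  also have "\<dots> = (\<Sum>l\<in>{i,j,k}. \<Sum>m\<in>{i,j,k}. u l * w m * kappaC_basis n c y l m)"
    apply (rule double_restrict) using lt apply auto[1] apply (simp only: bas) using d by (auto simp: ye)
  also have "\<dots> = c * om i j k u w"
    using d unfolding bas by (simp add: ye om_def algebra_simps)
  finally show ?thesis unfolding y_def .
qed


definition good :: "nat \<Rightarrow> nat \<Rightarrow> nat \<Rightarrow> ((nat \<Rightarrow> complex) \<Rightarrow> complex) \<Rightarrow> bool" where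
  "good p q r f \<longleftrightarrow> (\<exists>\<alpha> \<beta>. \<forall>u. f u = \<alpha> * (u p - u r) + \<beta> * (u q - u r))"

lemma good_diff:
  assumes "distinct [p,q,r]" "s \<in> {p,q,r}" "t \<in> {p,q,r}"
  shows "good p q r (\<lambda>u. u s - u t)"
  unfolding good_def
  apply (rule exI[of _ "(if s = p then 1 else 0) - (if t = p then 1 else 0)"])
  apply (rule exI[of _ "(if s = q then 1 else 0) - (if t = q then 1 else 0)"])
  using assms by (auto simp: algebra_simps)

lemma good_comb:
  assumes "good p q r g1" "good p q r g2" "\<And>u. f u = c * (g1 u + g2 u)"
  shows "good p q r f"
proof -
  obtain a1 b1 where 1: "\<And>u. g1 u = a1 * (u p - u r) + b1 * (u q - u r)" using assms(1) good_def by blast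
  obtain a2 b2 where 2: "\<And>u. g2 u = a2 * (u p - u r) + b2 * (u q - u r)" using assms(2) good_def by blast
  show ?thesis unfolding good_def
    by (rule exI[of _ "c*(a1+a2)"], rule exI[of _ "c*(b1+b2)"]) (simp add: assms(3) 1 2 algebra_simps)
qed

lemma good_zero_identity:
  assumes "good p q r f"
  shows "om p q r v2 v3 * f v1 + om p q r v3 v1 * f v2 + om p q r v1 v2 * f v3 = 0"
proof -
  obtain a1 b1 where 1: "\<And>u. f u = a1 * (u p - u r) + b1 * (u q - u r)" using assms good_def by blast
  show ?thesis unfolding 1 om_def by algebra
qed

lemma good_f:
  assumes dx: "distinct [i,j,k]" and dy: "distinct [p,q,r]"
    and lt: "i < n" "j < n" "k < n"
    and no1: "\<not> ((i \<in> {p,q,r} \<and> j \<notin> {p,q,r} \<and> k \<notin> {p,q,r}) \<or>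
                 (j \<in> {p,q,r} \<and> i \<notin> {p,q,r} \<and> k \<notin> {p,q,r}) \<or>
                 (k \<in> {p,q,r} \<and> i \<notin> {p,q,r} \<and> j \<notin> {p,q,r}))"
  shows "good p q r (\<lambda>u. om i j k (u + act (cycle_of_list [p,q,r]) u) (Wt n a b {p,q,r}))"
proof -
  define y where "y = cycle_of_list [p,q,r]"
  define T where "T = {p,q,r}"
  have yp: "y permutes T" unfolding y_def T_def using cycle_permutes[of "[p,q,r]"] by simp
  have iyp: "inv y permutes T" using permutes_inv[OF yp] .
  have inT: "x \<in> T \<Longrightarrow> inv y x \<in> T" for x using permutes_in_image[OF iyp] by blast
  have W: "\<And>x. x < n \<Longrightarrow> Wt n a b T x = (if x \<in> T then a else b)" unfolding Wt_def by simp
  have fe: "om i j k (u + act y u) (Wt n a b T) =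
     (u i + u (inv y i)) * (Wt n a b T j - Wt n a b T k) + (u j + u (inv y j)) * (Wt n a b T k - Wt n a b T i)
     + (u k + u (inv y k)) * (Wt n a b T i - Wt n a b T j)" for u
    unfolding om_def act_def by (simp add: algebra_simps)
  have gd: "s \<in> T \<Longrightarrow> t \<in> T \<Longrightarrow> good p q r (\<lambda>u. u s - u t)" for s t
    using good_diff[OF dy] unfolding T_def by blast
  have gdi: "s \<in> T \<Longrightarrow> t \<in> T \<Longrightarrow> good p q r (\<lambda>u. u (inv y s) - u (inv y t))" for s t
    using gd inT by blast
  have gz: "good p q r (\<lambda>u. 0)" unfolding good_def by (rule exI[of _ 0], rule exI[of _ 0]) simp
  have "good p q r (\<lambda>u. om i j k (u + act y u) (Wt n a b T))"
  proof (cases "i \<in> T"; cases "j \<in> T"; cases "k \<in> T")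
    assume h: "i \<in> T" "j \<in> T" "k \<in> T"
    show ?thesis unfolding fe using h lt gz by (simp add: W)
  next
    assume h: "i \<in> T" "j \<in> T" "k \<notin> T"
    show ?thesis
      by (rule good_comb[OF gd[of i j] gdi[of i j], where c = "a - b"]) (use h lt in \<open>simp_all add: fe W algebra_simps\<close>)
  next
    assume h: "i \<in> T" "j \<notin> T" "k \<in> T"
    show ?thesis
      by (rule good_comb[OF gd[of k i] gdi[of k i], where c = "a - b"]) (use h lt in \<open>simp_all add: fe W algebra_simps\<close>)
  next
    assume h: "i \<in> T" "j \<notin> T" "k \<notin> T"
    then show ?thesis using no1 unfolding T_def by blast
  next
    assume h: "i \<notin> T" "j \<in> T" "k \<in> T"
    show ?thesis
      by (rule good_comb[OF gd[of j k] gdi[of j k], where c = "a - b"]) (use h lt in \<open>simp_all add: fe W algebra_simps\<close>)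
  next
    assume h: "i \<notin> T" "j \<in> T" "k \<notin> T"
    then show ?thesis using no1 unfolding T_def by blast
  next
    assume h: "i \<notin> T" "j \<notin> T" "k \<in> T"
    then show ?thesis using no1 unfolding T_def by blast
  next
    assume h: "i \<notin> T" "j \<notin> T" "k \<notin> T"
    show ?thesis unfolding fe using h lt gz by (simp add: W)
  qed
  then show ?thesis unfolding y_def T_def .
qed


lemma ov1_i:
  assumes dx: "distinct [i,j,k]" and dy: "distinct [p,q,r]"
    and h: "i \<in> {p,q,r}" "j \<notin> {p,q,r}" "k \<notin> {p,q,r}"
    and lt: "i < n" "j < n" "k < n" "p < n" "q < n" "r < n"
  shows "is_kcycle n 5 (cycle_of_list [i,j,k] \<circ> cycle_of_list [p,q,r])"
proof -
  obtain q' r' where e: "cycle_of_list [p,q,r] = cycle_of_list [i,q',r']" and d': "distinct [i,q',r']"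
    and s: "{i,q',r'} = {p,q,r}"
  proof -
    consider "i = p" | "i = q" | "i = r" using h by blast
    then show ?thesis
    proof cases
      case 1 then show ?thesis using that[of q r] dy by auto
    next
      case 2
      have "cycle_of_list [p,q,r] = cycle_of_list [q,r,p]" using rot3[OF dy] .
      then show ?thesis using that[of r p] dy 2 by auto
    next
      case 3
      have dy2: "distinct [q,r,p]" using dy by auto
      have "cycle_of_list [p,q,r] = cycle_of_list [r,p,q]" using rot3[OF dy] rot3[OF dy2] by simp
      then show ?thesis using that[of p q] dy 3 by auto
    qed
  qed
  have jq: "j \<notin> {q',r'}" "k \<notin> {q',r'}" using h s by auto
  have eq: "cycle_of_list [i,j,k] \<circ> cycle_of_list [p,q,r] = cycle_of_list [i,q',r',j,k]"
    unfolding e using five[OF dx d' jq] .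
  show ?thesis unfolding is_kcycle_def eq
    by (rule exI[of _ "[i,q',r',j,k]"]) (use dx d' jq s lt in auto)
qed

lemma ov1:
  assumes dx: "distinct [i,j,k]" and dy: "distinct [p,q,r]"
    and h: "(i \<in> {p,q,r} \<and> j \<notin> {p,q,r} \<and> k \<notin> {p,q,r}) \<or>
                 (j \<in> {p,q,r} \<and> i \<notin> {p,q,r} \<and> k \<notin> {p,q,r}) \<or>
                 (k \<in> {p,q,r} \<and> i \<notin> {p,q,r} \<and> j \<notin> {p,q,r})"
    and lt: "i < n" "j < n" "k < n" "p < n" "q < n" "r < n"
  shows "is_kcycle n 5 (cycle_of_list [i,j,k] \<circ> cycle_of_list [p,q,r])"
proof -
  have dx2: "distinct [j,k,i]" using dx by auto
  have r1: "cycle_of_list [i,j,k] = cycle_of_list [j,k,i]" using rot3[OF dx] .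
  have r2: "cycle_of_list [i,j,k] = cycle_of_list [k,i,j]" using rot3[OF dx] rot3[OF dx2] by simp
  from h consider "i \<in> {p,q,r} \<and> j \<notin> {p,q,r} \<and> k \<notin> {p,q,r}"
    | "j \<in> {p,q,r} \<and> i \<notin> {p,q,r} \<and> k \<notin> {p,q,r}"
    | "k \<in> {p,q,r} \<and> i \<notin> {p,q,r} \<and> j \<notin> {p,q,r}" by blast
  then show ?thesis
  proof cases
    case 1 then show ?thesis using ov1_i[OF dx dy _ _ _ lt] by blast
  next
    case 2 then show ?thesis unfolding r1 using ov1_i[OF dx2 dy _ _ _ lt(2,3,1,4-6)] by blast
  next
    case 3
    have dx3: "distinct [k,i,j]" using dx by auto
    show ?thesis unfolding r2 using 3 ov1_i[OF dx3 dy _ _ _ lt(3,1,2,4-6)] by blast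
  qed
qed

lemma omlin: "om i j k u (\<lambda>z. s * W z) = s * om i j k u W"
  unfolding om_def by (simp add: algebra_simps)

lemma term0:
  assumes dx: "distinct [i,j,k]" and dy: "distinct [p,q,r]"
    and lt: "i < n" "j < n" "k < n" "p < n" "q < n" "r < n"
    and nc: "\<not> is_kcycle n 5 (cycle_of_list [i,j,k] \<circ> cycle_of_list [p,q,r])"
  shows "phi_xy (kappaL n a b) (kappaL n a b) (cycle_of_list [i,j,k]) (cycle_of_list [p,q,r]) v1 v2 v3 = 0
       \<and> phi_xy (kappaC n c) (kappaL n a b) (cycle_of_list [i,j,k]) (cycle_of_list [p,q,r]) v1 v2 v3 = 0"
proof -
  define x where "x = cycle_of_list [i,j,k]"
  define y where "y = cycle_of_list [p,q,r]"
  define Wy where "Wy = Wt n a b {p,q,r}"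
  define Wx where "Wx = Wt n a b {i,j,k}"
  define f where "f = (\<lambda>u. om i j k (u + act y u) Wy)"
  have no1: "\<not> ((i \<in> {p,q,r} \<and> j \<notin> {p,q,r} \<and> k \<notin> {p,q,r}) \<or>
                 (j \<in> {p,q,r} \<and> i \<notin> {p,q,r} \<and> k \<notin> {p,q,r}) \<or>
                 (k \<in> {p,q,r} \<and> i \<notin> {p,q,r} \<and> j \<notin> {p,q,r}))"
    using ov1[OF dx dy _ lt] nc by blast
  have g: "good p q r f" unfolding f_def y_def Wy_def using good_f[OF dx dy lt(1-3) no1] .
  have G: "om p q r v2 v3 * f v1 + om p q r v3 v1 * f v2 + om p q r v1 v2 * f v3 = 0"
    using good_zero_identity[OF g] .
  have L: "kappaL n a b x U (kappaL n a b y s t) = (\<lambda>z. (om p q r s t * om i j k U Wy) * Wx z)" for U s t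
    unfolding x_def y_def Wx_def Wy_def kL[OF dx lt(1-3)] kL[OF dy lt(4-6)] omlin by simp
  have C: "kappaC n c x U (kappaL n a b y s t) = c * (om p q r s t * om i j k U Wy)" for U s t
    unfolding x_def y_def Wx_def Wy_def kC[OF dx lt(1-3)] kL[OF dy lt(4-6)] omlin by simp
  have "phi_xy (kappaL n a b) (kappaL n a b) x y v1 v2 v3 =
     (\<lambda>z. (om p q r v2 v3 * f v1 + om p q r v3 v1 * f v2 + om p q r v1 v2 * f v3) * Wx z)"
    unfolding phi_xy_def L f_def by (simp add: fun_eq_iff algebra_simps)
  moreover have "phi_xy (kappaC n c) (kappaL n a b) x y v1 v2 v3 =
     c * (om p q r v2 v3 * f v1 + om p q r v3 v1 * f v2 + om p q r v1 v2 * f v3)"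
    unfolding phi_xy_def C f_def by (simp add: algebra_simps)
  ultimately show ?thesis unfolding G x_def y_def by (simp add: zero_fun_def)
qed


lemma kL0: "\<not> is_kcycle n 3 y \<Longrightarrow> kappaL n a b y u w = 0"
  unfolding kappaL_def kappaL_basis_def by (simp add: zero_fun_def)
lemma kC0: "\<not> is_kcycle n 3 y \<Longrightarrow> kappaC n c y u w = 0"
  unfolding kappaC_def kappaC_basis_def by simp
lemma kLz: "kappaL n a b y u 0 = 0"
  unfolding kappaL_def by (simp add: zero_fun_def)
lemma kCz: "kappaC n c y u 0 = 0"
  unfolding kappaC_def by simp

lemma get3:
  assumes "is_kcycle n 3 x"
  obtains i j k where "distinct [i,j,k]" "i < n" "j < n" "k < n" "x = cycle_of_list [i,j,k]"
proof -
  obtain cs where cs: "length cs = 3" "distinct cs" "set cs \<subseteq> {..<n}" "x = cycle_of_list cs"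
    using assms unfolding is_kcycle_def by blast
  then obtain i j k where "cs = [i,j,k]"
    by (metis (no_types) length_0_conv length_Suc_conv numeral_3_eq_3)
  then show ?thesis using that cs by auto
qed

lemma pair0:
  assumes "\<not> is_kcycle n 5 (x \<circ> y)"
  shows "phi_xy (kappaL n a b) (kappaL n a b) x y v1 v2 v3 = 0
       \<and> phi_xy (kappaC n c) (kappaL n a b) x y v1 v2 v3 = 0"
proof (cases "is_kcycle n 3 x \<and> is_kcycle n 3 y")
  case True
  then obtain i j k p q r where dx: "distinct [i,j,k]" "i < n" "j < n" "k < n" "x = cycle_of_list [i,j,k]"
    and dy: "distinct [p,q,r]" "p < n" "q < n" "r < n" "y = cycle_of_list [p,q,r]"
    using get3 by metis
  show ?thesis using term0[OF dx(1) dy(1) dx(2-4) dy(2-4)] assms dx(5) dy(5) by simp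
next
  case False
  show ?thesis
  proof (cases "is_kcycle n 3 x")
    case False
    then show ?thesis unfolding phi_xy_def by (simp add: kL0 kC0)
  next
    case True
    then have "\<not> is_kcycle n 3 y" using \<open>\<not> (is_kcycle n 3 x \<and> is_kcycle n 3 y)\<close> by blast
    then show ?thesis unfolding phi_xy_def by (simp add: kL0 kLz kCz)
  qed
qed

theorem proposition7p2:
  fixes n :: nat and a b c :: complex and g :: "nat \<Rightarrow> nat"
  assumes "n \<ge> 3"
    and "g permutes {..<n}"
    and "\<not> is_kcycle n 5 g"
  shows "\<forall>v1 \<in> vecV n. \<forall>v2 \<in> vecV n. \<forall>v3 \<in> vecV n.
           phi_g n (kappaL n a b) (kappaL n a b) g v1 v2 v3 = 0
         \<and> phi_g n (kappaC n c) (kappaL n a b) g v1 v2 v3 = 0"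
proof (intro ballI conjI)
  fix v1 v2 v3
  show "phi_g n (kappaL n a b) (kappaL n a b) g v1 v2 v3 = 0"
    unfolding phi_g_def by (rule sum.neutral) (use pair0 assms(3) in auto)
  show "phi_g n (kappaC n c) (kappaL n a b) g v1 v2 v3 = 0"
    unfolding phi_g_def by (rule sum.neutral) (use pair0 assms(3) in auto)
qed

end
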